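(* Let $D$ be a dataset, let $\Omega=\{\omega_1,\dots,\omega_k\}$ be a finite set of outcomes, let $q$ be a real-valued quality function with sensitivity $\Delta>0$, and let $\varepsilon>0$. Write $q_i=q(D,\omega_i)$ and $q_*=\max_i q_i$. Then the Permute-and-Flip mechanism and Report Noisy Max with Exponential Noise (both defined below, run on the same inputs $D,q,\Delta,\Omega,\varepsilon$) have the same output distribution on $\{1,\dots,k\}$; that is, for every $i\in\{1,\dots,k\}$ the probability that Permute-and-Flip returns $i$ equals the probability that Report Noisy Max with Exponential Noise returns $i$.
   Context: $\mathrm{Expo}(\lambda)$ denotes the exponential distribution with rate $\lambda>0$, with density $f(x;\lambda)=\lambda e^{-\lambda x}\mathbf{1}[x\ge 0]$. $\mathrm{Bernoulli}(p)$ is a coin that equals $1$ with probability $p$. The sensitivity of $q$ is $\Delta=\sup_{D_1,D_2}\max_{\omega_i}|q(D_1,\omega_i)-q(D_2,\omega_i)|$ over neighboring datasets (differing by addition/removal of one person's data). Report Noisy Max with Exponential Noise: for each $i=1,\dots,k$ independently set $v_i=q(D,\omega_i)+X_i$ with $X_i\sim\mathrm{Expo}(\varepsilon/(2\Delta))$; return $\arg\max_i v_i$ (ties occur with probability zero). Permute-and-Flip: compute $q_*=\max_i q(D,\omega_i)$; draw a uniformly random permutation $\pi$ of $\{1,\dots,k\}$; for $j=1,\dots,k$ in order, let $r=\pi(j)$, $p=\exp\left(\frac{\varepsilon}{2\Delta}(q(D,\omega_r)-q_* )\right)$, and flip an independent $\mathrm{Bernoulli}(p)$ coin; if it equals $1$,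 return $r$ and stop. (The coin for an index attaining $q_*$ has $p=1$, so the procedure always returns.) *)

theory Defs
  imports "HOL-Probability.Probability" "HOL-Combinatorics.Multiset_Permutations"
begin

definition sensitivity ::
  "('d \<Rightarrow> 'd \<Rightarrow> bool) \<Rightarrow> ('d \<Rightarrow> 'o \<Rightarrow> real) \<Rightarrow> (nat \<Rightarrow> 'o) \<Rightarrow> nat \<Rightarrow> real" where
  "sensitivity nbr q \<omega> k =
     (SUP p\<in>{(D1, D2). nbr D1 D2}. Max ((\<lambda>i. \<bar>q (fst p) (\<omega> i) - q (snd p) (\<omega> i)\<bar>) ` {1..k}))"

text \<open>Report Noisy Max with exponential noise: probability that index i is returned,
  i.e. that the noisy score of i strictly exceeds all others (ties have probability zero).\<close>
definition rnm_exp_prob :: "(nat \<Rightarrow> real) \<Rightarrow> nat \<Rightarrow> real \<Rightarrow> real \<Rightarrow> nat \<Rightarrow> real" where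
  "rnm_exp_prob qv k eps \<Delta> i =
     (let M = PiM {1..k} (\<lambda>_. density lborel (exponential_density (eps / (2 * \<Delta>))))
      in measure M {X \<in> space M. \<forall>j\<in>{1..k}. j \<noteq> i \<longrightarrow> qv j + X j < qv i + X i})"

fun pf_flip :: "(nat \<Rightarrow> real) \<Rightarrow> nat list \<Rightarrow> nat pmf" where
  "pf_flip p [] = return_pmf 0"
| "pf_flip p (r # rs) =
     bind_pmf (bernoulli_pmf (p r)) (\<lambda>b. if b then return_pmf r else pf_flip p rs)"

definition permute_and_flip :: "(nat \<Rightarrow> real) \<Rightarrow> nat \<Rightarrow> real \<Rightarrow> real \<Rightarrow> nat pmf" where
  "permute_and_flip qv k eps \<Delta> =
     (let qstar = Max (qv ` {1..k})
      in bind_pmf (pmf_of_set (permutations_of_set {1..k}))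
           (pf_flip (\<lambda>r. exp (eps / (2 * \<Delta>) * (qv r - qstar)))))"

end

theory Submission
  imports Defs
begin


lemma set_pf_flip: "set_pmf (pf_flip p xs) \<subseteq> insert 0 (set xs)"
  by (induction xs) (auto simp: set_bind_pmf split: if_splits)

lemma pmf_pf_flip_Cons:
  assumes "0 \<le> p x" "p x \<le> 1"
  shows "pmf (pf_flip p (x # xs)) i = p x * (if x = i then 1 else 0) + (1 - p x) * pmf (pf_flip p xs) i"
  using assms by (simp add: pmf_bind)

definition PF :: "(nat \<Rightarrow> real) \<Rightarrow> nat set \<Rightarrow> nat pmf" where
  "PF p S = bind_pmf (pmf_of_set (permutations_of_set S)) (pf_flip p)"

lemma PF_notin: assumes "finite S" "i \<notin> S" "i \<noteq> 0" shows "pmf (PF p S) i = 0"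
proof -
  have "i \<notin> set_pmf (PF p S)"
  proof
    assume "i \<in> set_pmf (PF p S)"
    then obtain xs where "xs \<in> permutations_of_set S" "i \<in> set_pmf (pf_flip p xs)"
      using assms unfolding PF_def by (auto simp: set_bind_pmf set_pmf_of_set)
    then show False using assms set_pf_flip[of p xs] by (auto simp: permutations_of_set_def)
  qed
  then show ?thesis by (simp add: set_pmf_eq)
qed

lemma PF_rec:
  assumes "finite S" "S \<noteq> {}" "\<And>j. j \<in> S \<Longrightarrow> 0 \<le> p j \<and> p j \<le> 1"
  shows "pmf (PF p S) i = (\<Sum>x\<in>S. p x * (if x = i then 1 else 0) + (1 - p x) * pmf (PF p (S - {x})) i) / card S"
proof -
  have "PF p S = pmf_of_set S \<bind> (\<lambda>x. pmf_of_set (permutations_of_set (S - {x})) \<bind> (\<lambda>xs. pf_flip p (x # xs)))"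
    unfolding PF_def by (simp add: random_permutation_of_set assms bind_assoc_pmf bind_return_pmf)
  then have "pmf (PF p S) i = (\<Sum>x\<in>S. pmf (pmf_of_set (permutations_of_set (S - {x})) \<bind> (\<lambda>xs. pf_flip p (x # xs))) i) / card S"
    using assms by (simp add: pmf_bind_pmf_of_set)
  also have "\<dots> = (\<Sum>x\<in>S. p x * (if x = i then 1 else 0) + (1 - p x) * pmf (PF p (S - {x})) i) / card S"
  proof (intro arg_cong[where f="\<lambda>x. x / _"] sum.cong refl)
    fix x assume x: "x \<in> S"
    have ne: "permutations_of_set (S - {x}) \<noteq> {}" "finite (permutations_of_set (S - {x}))"
      using assms by auto
    show "pmf (pmf_of_set (permutations_of_set (S - {x})) \<bind> (\<lambda>xs. pf_flip p (x # xs))) i =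
          p x * (if x = i then 1 else 0) + (1 - p x) * pmf (PF p (S - {x})) i"
      using assms(3)[OF x] ne unfolding PF_def
      apply (simp only: pmf_bind_pmf_of_set[OF ne] pmf_pf_flip_Cons)
      apply (simp add: sum.distrib sum_distrib_left[symmetric] add_divide_distrib)
      done
  qed
  finally show ?thesis .
qed
definition gpoly :: "(nat \<Rightarrow> real) \<Rightarrow> nat set \<Rightarrow> real \<Rightarrow> real" where
  "gpoly p J t = (\<Prod>j\<in>J. 1 - t * p j)"

definition Ig :: "(nat \<Rightarrow> real) \<Rightarrow> nat set \<Rightarrow> real" where
  "Ig p J = integral {0..1} (gpoly p J)"

lemma gpoly_cont: "continuous_on A (gpoly p J)"
  unfolding gpoly_def by (intro continuous_intros)

lemma gpoly_deriv: "(gpoly p J has_field_derivative (\<Sum>r\<in>J. (- p r) * gpoly p (J - {r}) t)) (at t)"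
  unfolding gpoly_def
  by (rule has_field_derivative_prod) (auto intro!: derivative_eq_intros)

lemma gpoly_remove: "finite J \<Longrightarrow> r \<in> J \<Longrightarrow> gpoly p J t = (1 - t * p r) * gpoly p (J - {r}) t"
  unfolding gpoly_def by (simp add: prod.remove)

lemma Ig_rec:
  assumes J: "finite J"
  shows "(card J + 1) * Ig p J = 1 + (\<Sum>r\<in>J. (1 - p r) * Ig p (J - {r}))"
proof -
  define h where "h t = (t - 1) * gpoly p J t" for t
  define h' where "h' t = gpoly p J t + (t - 1) * (\<Sum>r\<in>J. (- p r) * gpoly p (J - {r}) t)" for t
  have "(h' has_integral (h 1 - h 0)) {0..1}"
  proof (rule fundamental_theorem_of_calculus)
    fix x :: real assume "x \<in> {0..1}"
    have "(h has_field_derivative h' x) (at x)"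
      unfolding h_def h'_def
      by (auto intro!: derivative_eq_intros gpoly_deriv)
    then show "(h has_vector_derivative h' x) (at x within {0..1})"
      by (simp add: has_real_derivative_iff_has_vector_derivative has_vector_derivative_at_within)
  qed simp
  moreover have "h 1 - h 0 = 1" by (simp add: h_def gpoly_def)
  moreover have "h' = (\<lambda>t. (card J + 1) * gpoly p J t - (\<Sum>r\<in>J. (1 - p r) * gpoly p (J - {r}) t))"
  proof (rule ext)
    fix t
    have "(\<Sum>r\<in>J. (1 - p r) * gpoly p (J - {r}) t) = (\<Sum>r\<in>J. gpoly p J t + (t - 1) * (p r * gpoly p (J - {r}) t))"
      by (rule sum.cong) (auto simp: gpoly_remove[OF J] algebra_simps)
    also have "\<dots> = card J * gpoly p J t + (t - 1) * (\<Sum>r\<in>J. p r * gpoly p (J - {r}) t)"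
      by (simp add: sum.distrib sum_distrib_left)
    finally have calc: "(\<Sum>r\<in>J. (1 - p r) * gpoly p (J - {r}) t) = card J * gpoly p J t + (t - 1) * (\<Sum>r\<in>J. p r * gpoly p (J - {r}) t)" .
    have S: "(\<Sum>r\<in>J. (- p r) * gpoly p (J - {r}) t) = - (\<Sum>r\<in>J. p r * gpoly p (J - {r}) t)"
      by (simp add: sum_negf)
    show "h' t = (card J + 1) * gpoly p J t - (\<Sum>r\<in>J. (1 - p r) * gpoly p (J - {r}) t)"
      unfolding h'_def S calc by (simp add: algebra_simps)
  qed
  ultimately have "((\<lambda>t. (card J + 1) * gpoly p J t - (\<Sum>r\<in>J. (1 - p r) * gpoly p (J - {r}) t)) has_integral 1) {0..1}"
    by simp
  moreover have "((\<lambda>t. (card J + 1) * gpoly p J t - (\<Sum>r\<in>J. (1 - p r) * gpoly p (J - {r}) t)) has_integral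
      ((card J + 1) * Ig p J - (\<Sum>r\<in>J. (1 - p r) * Ig p (J - {r})))) {0..1}"
    unfolding Ig_def
    by (intro has_integral_diff has_integral_mult_right has_integral_sum J integrable_integral
          integrable_continuous_real gpoly_cont)
  ultimately have "1 = (card J + 1) * Ig p J - (\<Sum>r\<in>J. (1 - p r) * Ig p (J - {r}))"
    by (rule has_integral_unique)
  then show ?thesis by linarith
qed


lemma PF_formula:
  assumes "finite S" "i \<in> S" "i \<noteq> 0" "\<And>j. j \<in> S \<Longrightarrow> 0 \<le> p j \<and> p j \<le> 1"
  shows "pmf (PF p S) i = p i * Ig p (S - {i})"
  using assms
proof (induction S rule: finite_psubset_induct)
  case (psubset S)
  define J where "J = S - {i}"
  have J: "finite J" "card S = card J + 1" "i \<notin> J"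
    using psubset card_gt_0_iff[of S] by (auto simp: J_def card_Suc_Diff1)
  have "pmf (PF p S) i = (\<Sum>x\<in>S. p x * (if x = i then 1 else 0) + (1 - p x) * pmf (PF p (S - {x})) i) / card S"
    using psubset by (intro PF_rec) auto
  also have "(\<Sum>x\<in>S. p x * (if x = i then 1 else 0) + (1 - p x) * pmf (PF p (S - {x})) i) =
     (p i + (1 - p i) * pmf (PF p (S - {i})) i) + (\<Sum>x\<in>J. p x * (if x = i then 1 else 0) + (1 - p x) * pmf (PF p (S - {x})) i)"
    using psubset unfolding J_def by (simp add: sum.remove)
  also have "pmf (PF p (S - {i})) i = 0"
    using psubset by (intro PF_notin) auto
  also have "(\<Sum>x\<in>J. p x * (if x = i then 1 else 0) + (1 - p x) * pmf (PF p (S - {x})) i) =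
       (\<Sum>x\<in>J. p i * ((1 - p x) * Ig p (J - {x})))"
  proof (rule sum.cong[OF refl])
    fix x assume x: "x \<in> J"
    have "pmf (PF p (S - {x})) i = p i * Ig p (S - {x} - {i})"
      using x psubset unfolding J_def by (intro psubset.IH) auto
    moreover have "S - {x} - {i} = J - {x}" unfolding J_def by auto
    ultimately show "p x * (if x = i then 1 else 0) + (1 - p x) * pmf (PF p (S - {x})) i = p i * ((1 - p x) * Ig p (J - {x}))"
      using x J by auto
  qed
  also have "(\<Sum>x\<in>J. p i * ((1 - p x) * Ig p (J - {x}))) = p i * (\<Sum>x\<in>J. (1 - p x) * Ig p (J - {x}))"
    by (simp add: sum_distrib_left)
  also have "(\<Sum>x\<in>J. (1 - p x) * Ig p (J - {x})) = (card J + 1) * Ig p J - 1"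
    using Ig_rec[OF J(1), of p] by linarith
  finally have eq: "pmf (PF p S) i = (p i + (1 - p i) * 0 + p i * ((card J + 1) * Ig p J - 1)) / card S" .
  have "(p i + (1 - p i) * 0 + p i * ((card J + 1) * Ig p J - 1)) = (card J + 1) * (p i * Ig p J)"
    by (simp add: algebra_simps)
  then have "pmf (PF p S) i = p i * Ig p J"
    using eq unfolding J(2) by simp
  then show ?case by (simp add: J_def)
qed


lemma expo_lt:
  fixes c b :: real
  assumes c: "c > 0"
  shows "emeasure (density lborel (exponential_density c)) {..<b} = ennreal (1 - exp (- c * b))"
proof (cases "b \<le> 0")
  case True
  have "emeasure (density lborel (exponential_density c)) {..<b} =
      (\<integral>\<^sup>+x. ennreal (exponential_density c x) * indicator {..<b} x \<partial>lborel)"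
    by (subst emeasure_density) auto
  also have "\<dots> = (\<integral>\<^sup>+(x::real). 0 \<partial>lborel)"
    using True by (intro nn_integral_cong) (auto simp: exponential_density_def indicator_def)
  also have "\<dots> = ennreal (1 - exp (- c * b))"
    using True c by (simp add: ennreal_eq_0_iff mult_nonneg_nonpos)
  finally show ?thesis .
next
  case False
  define E where "E = density lborel (exponential_density c)"
  interpret prob_space E unfolding E_def using c by (rule prob_space_exponential_density)
  have sp: "space E = UNIV" by (simp add: E_def)
  have "emeasure E {b..} = (\<integral>\<^sup>+x. ennreal (exponential_density c x) * indicator {b..} x \<partial>lborel)"
    unfolding E_def by (subst emeasure_density) auto
  also have "\<dots> = (\<integral>\<^sup>+x. ennreal (c * exp (- x * c)) * indicator {b..} x \<partial>lborel)"
    using False by (intro nn_integral_cong) (auto simp: exponential_density_def indicator_def)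
  also have "\<dots> = ennreal (0 - (- exp (- b * c)))"
  proof (rule nn_integral_FTC_atLeast)
    show "((\<lambda>x. - exp (- x * c)) \<longlongrightarrow> 0) at_top"
    proof -
      have l1: "filterlim (\<lambda>x. c * x) at_top at_top"
        by (rule filterlim_tendsto_pos_mult_at_top[OF tendsto_const c filterlim_ident])
      have l2: "filterlim (\<lambda>x. - (c * x)) at_bot at_top"
        using filterlim_compose[OF filterlim_uminus_at_bot_at_top l1] by simp
      have "((\<lambda>x. exp (- (c * x))) \<longlongrightarrow> 0) at_top"
        by (rule filterlim_compose[OF exp_at_bot l2])
      then have "((\<lambda>x. - exp (- (c * x))) \<longlongrightarrow> - 0) at_top"
        by (rule tendsto_minus)
      then show ?thesis by (simp add: mult.commute)
    qed
  qed (use c in \<open>auto intro!: derivative_eq_intros\<close>)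
  finally have ge: "emeasure E {b..} = ennreal (exp (- c * b))" by (simp add: mult.commute)
  have "measure E {..<b} = 1 - measure E {b..}"
  proof -
    have "{..<b} = space E - {b..}" by (auto simp: sp)
    moreover have "{b..} \<in> sets E" unfolding E_def by simp
    ultimately show ?thesis using prob_compl[of "{b..}"] by simp
  qed
  also have "measure E {b..} = exp (- c * b)"
    using ge by (simp add: emeasure_eq_measure)
  finally show ?thesis
    by (simp add: emeasure_eq_measure E_def[symmetric])
qed


lemma RNM_formula:
  fixes qv :: "nat \<Rightarrow> real" and c :: real and k i :: nat
  assumes c: "c > 0" and i: "i \<in> {1..k}"
  defines "qs \<equiv> Max (qv ` {1..k})"
  defines "p \<equiv> (\<lambda>r. exp (c * (qv r - qs)))"
  shows "measure (PiM {1..k} (\<lambda>_. density lborel (exponential_density c)))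
     {X \<in> space (PiM {1..k} (\<lambda>_. density lborel (exponential_density c))).
        \<forall>j\<in>{1..k}. j \<noteq> i \<longrightarrow> qv j + X j < qv i + X i}
   = p i * Ig p ({1..k} - {i})"
proof -
  define E where "E = density lborel (exponential_density c)"
  define M where "M = PiM {1..k} (\<lambda>_. E)"
  define I where "I = {1..k} - {i}"
  define A where "A = {X \<in> space M. \<forall>j\<in>{1..k}. j \<noteq> i \<longrightarrow> qv j + X j < qv i + X i}"
  have ins: "{1..k} = insert i I" "finite I" "i \<notin> I" using i by (auto simp: I_def)
  interpret E: prob_space E unfolding E_def using c by (rule prob_space_exponential_density)
  interpret P: product_prob_space "\<lambda>_. E" "{1..k}"
    by unfold_locales
  have sE: "space E = UNIV" "sets E = sets borel" by (simp_all add: E_def)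
  have A_sets: "A \<in> sets M"
  proof -
    have mE: "measurable M E = measurable M borel"
      by (rule measurable_cong_sets) (simp_all add: sE)
    have comp: "(\<lambda>X. X j) \<in> borel_measurable M" if "j \<in> {1..k}" for j
      using measurable_component_singleton[OF that, of "\<lambda>_. E"] mE by (simp add: M_def)
    have "{X \<in> space M. j \<noteq> i \<longrightarrow> qv j + X j < qv i + X i} \<in> sets M" if j: "j \<in> {1..k}" for j
    proof (cases "j = i")
      case False
      have "{X \<in> space M. qv j + X j < qv i + X i} \<in> sets M"
        by (intro borel_measurable_less borel_measurable_add borel_measurable_const comp j i)
      then show ?thesis using False by simp
    qed simp
    then show ?thesis unfolding A_def
      by (rule sets.sets_Collect_finite_All) auto
  qed
  have emA: "emeasure M A = (\<integral>\<^sup>+y. (\<Prod>j\<in>I. ennreal (1 - exp (- c * (qv i + y - qv j)))) \<partial>E)"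
  proof -
    have "emeasure M A = (\<integral>\<^sup>+X. indicator A X \<partial>M)"
      using A_sets by simp
    also have "\<dots> = (\<integral>\<^sup>+X. indicator A X \<partial>PiM (insert i I) (\<lambda>_. E))"
      by (simp only: M_def ins(1))
    also have "\<dots> = (\<integral>\<^sup>+y. (\<integral>\<^sup>+x. indicator A (x(i := y)) \<partial>PiM I (\<lambda>_. E)) \<partial>E)"
      by (rule P.product_nn_integral_insert_rev) (use ins A_sets in \<open>simp_all add: M_def\<close>)
    also have "\<dots> = (\<integral>\<^sup>+y. (\<Prod>j\<in>I. ennreal (1 - exp (- c * (qv i + y - qv j)))) \<partial>E)"
    proof (rule nn_integral_cong)
      fix y :: real
      have "(\<integral>\<^sup>+x. indicator A (x(i := y)) \<partial>PiM I (\<lambda>_. E)) =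
            (\<integral>\<^sup>+x. indicator (PiE I (\<lambda>j. {..< qv i + y - qv j})) x \<partial>PiM I (\<lambda>_. E))"
      proof (rule nn_integral_cong)
        fix x assume "x \<in> space (PiM I (\<lambda>_. E))"
        then have x: "x \<in> PiE I (\<lambda>_. UNIV)" by (simp add: space_PiM sE)
        have sp: "x(i := y) \<in> space M"
          using x ins by (auto simp: M_def space_PiM sE PiE_iff extensional_def)
        have "(x(i := y) \<in> A) = (x \<in> PiE I (\<lambda>j. {..< qv i + y - qv j}))"
          using sp x ins unfolding A_def I_def by (auto simp: PiE_iff algebra_simps)
        then show "indicator A (x(i := y)) = indicator (PiE I (\<lambda>j. {..< qv i + y - qv j})) x"
          by (simp add: indicator_def)
      qed
      also have "\<dots> = emeasure (PiM I (\<lambda>_. E)) (PiE I (\<lambda>j. {..< qv i + y - qv j}))"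
        by (rule nn_integral_indicator) (use ins in \<open>auto intro!: sets_PiM_I_finite simp: sE\<close>)
      also have "\<dots> = (\<Prod>j\<in>I. emeasure E {..< qv i + y - qv j})"
        by (rule P.emeasure_PiM) (use ins in \<open>auto simp: sE\<close>)
      also have "\<dots> = (\<Prod>j\<in>I. ennreal (1 - exp (- c * (qv i + y - qv j))))"
        unfolding E_def using c by (simp add: expo_lt)
      finally show "(\<integral>\<^sup>+x. indicator A (x(i := y)) \<partial>PiM I (\<lambda>_. E)) = (\<Prod>j\<in>I. ennreal (1 - exp (- c * (qv i + y - qv j))))" .
    qed
    finally show ?thesis .
  qed
  define y0 where "y0 = qs - qv i"
  have fin: "finite (qv ` {1..k})" "qv ` {1..k} \<noteq> {}" using i by auto
  have qmax: "qv j \<le> qs" if "j \<in> {1..k}" for j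
    unfolding qs_def using fin that by (intro Max_ge) auto
  obtain jm where jm: "jm \<in> {1..k}" "qv jm = qs"
    using Max_in[OF fin] unfolding qs_def by auto
  have y0: "0 \<le> y0" using qmax[OF i] by (simp add: y0_def)
  have pi: "p i = exp (- c * y0)" by (simp add: p_def y0_def algebra_simps)
  have ppos: "p j > 0" for j by (simp add: p_def)
  have ple: "p j \<le> 1" if "j \<in> {1..k}" for j
    using qmax[OF that] c by (simp add: p_def mult_nonneg_nonpos)
  have pq: "exp (- c * y) / p i * p j = exp (- c * (qv i + y - qv j))" for y j
  proof -
    have "exp (- c * y) / p i * p j = exp (- c * y - c * (qv i - qs) + c * (qv j - qs))"
      by (simp add: p_def exp_add exp_diff)
    also have "- c * y - c * (qv i - qs) + c * (qv j - qs) = - c * (qv i + y - qv j)"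
      by (simp add: algebra_simps)
    finally show ?thesis .
  qed
  define fy where "fy y = c * exp (- c * y) * (\<Prod>j\<in>I. 1 - exp (- c * (qv i + y - qv j)))" for y
  have fy_gpoly: "fy y = c * exp (- c * y) * gpoly p I (exp (- c * y) / p i)" for y
    unfolding fy_def gpoly_def pq[symmetric] by (rule refl)
  have fy_nonneg: "0 \<le> fy y" if "y0 \<le> y" for y
  proof -
    have "0 \<le> 1 - exp (- c * (qv i + y - qv j))" if j: "j \<in> I" for j
    proof -
      have "qv j \<le> qs" using j qmax by (auto simp: I_def)
      then have "0 \<le> qv i + y - qv j" using \<open>y0 \<le> y\<close> by (simp add: y0_def)
      then have "exp (- c * (qv i + y - qv j)) \<le> 1" using c by (simp add: mult_nonneg_nonneg)
      then show ?thesis by simp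
    qed
    then show ?thesis unfolding fy_def using c by (intro mult_nonneg_nonneg prod_nonneg) auto
  qed
  have step2: "(\<integral>\<^sup>+y. (\<Prod>j\<in>I. ennreal (1 - exp (- c * (qv i + y - qv j)))) \<partial>E) =
      (\<integral>\<^sup>+y. ennreal (fy y) * indicator {y0..} y \<partial>lborel)"
  proof -
    have "(\<integral>\<^sup>+y. (\<Prod>j\<in>I. ennreal (1 - exp (- c * (qv i + y - qv j)))) \<partial>E) =
       (\<integral>\<^sup>+y. ennreal (exponential_density c y) * (\<Prod>j\<in>I. ennreal (1 - exp (- c * (qv i + y - qv j)))) \<partial>lborel)"
      unfolding E_def by (rule nn_integral_density) measurable
    also have "\<dots> = (\<integral>\<^sup>+y. ennreal (fy y) * indicator {y0..} y \<partial>lborel)"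
    proof (rule nn_integral_cong)
      fix y :: real
      show "ennreal (exponential_density c y) * (\<Prod>j\<in>I. ennreal (1 - exp (- c * (qv i + y - qv j)))) =
            ennreal (fy y) * indicator {y0..} y"
      proof (cases "y0 \<le> y")
        case True
        have fac: "0 \<le> 1 - exp (- c * (qv i + y - qv j))" if j: "j \<in> I" for j
        proof -
          have "qv j \<le> qs" using j qmax by (auto simp: I_def)
          then have "0 \<le> qv i + y - qv j" using True by (simp add: y0_def)
          then have "exp (- c * (qv i + y - qv j)) \<le> 1" using c by (simp add: mult_nonneg_nonneg)
          then show ?thesis by simp
        qed
        have "(\<Prod>j\<in>I. ennreal (1 - exp (- c * (qv i + y - qv j)))) = ennreal (\<Prod>j\<in>I. 1 - exp (- c * (qv i + y - qv j)))"
          using fac by (simp add: prod_ennreal)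
        moreover have "exponential_density c y = c * exp (- c * y)"
          using True y0 by (simp add: exponential_density_def mult.commute)
        ultimately show ?thesis using True c fac
          by (simp add: fy_def ennreal_mult prod_nonneg)
      next
        case False
        show ?thesis
        proof (cases "y < 0")
          case True
          then show ?thesis using False by (simp add: exponential_density_def)
        next
          case ge: False
          then have "jm \<noteq> i" using False jm by (auto simp: y0_def)
          then have jmI: "jm \<in> I" using jm by (auto simp: I_def)
          have "qv i + y - qv jm < 0" using False jm by (simp add: y0_def)
          then have "1 < exp (- c * (qv i + y - qv jm))" using c by (simp add: mult_pos_neg)
          then have "ennreal (1 - exp (- c * (qv i + y - qv jm))) = 0"
            by (simp add: ennreal_eq_0_iff)
          then have "(\<Prod>j\<in>I. ennreal (1 - exp (- c * (qv i + y - qv j)))) = 0"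
            using jmI ins(2) by (simp add: prod.remove[of I jm])
          then show ?thesis using False by simp
        qed
      qed
    qed
    finally show ?thesis .
  qed
  define R where "R t = integral {-1..t} (gpoly p I)" for t
  have dR: "(R has_real_derivative gpoly p I t) (at t)" if "t \<in> {-1<..<2}" for t
  proof -
    have "(R has_real_derivative gpoly p I t) (at t within {-1..2})"
      unfolding R_def using that by (intro integral_has_real_derivative gpoly_cont) auto
    moreover have "at t within {-1..2} = at t"
      using that by (intro at_within_interior) auto
    ultimately show ?thesis by simp
  qed
  define F where "F y = - p i * R (exp (- c * y) / p i)" for y
  have tlim: "((\<lambda>y. exp (- c * y) / p i) \<longlongrightarrow> 0) at_top"
  proof -
    have l1: "filterlim (\<lambda>x. c * x) at_top at_top"
      by (rule filterlim_tendsto_pos_mult_at_top[OF tendsto_const c filterlim_ident])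
    have l2: "filterlim (\<lambda>x. - (c * x)) at_bot at_top"
      using filterlim_compose[OF filterlim_uminus_at_bot_at_top l1] by simp
    have "((\<lambda>x. exp (- (c * x))) \<longlongrightarrow> 0) at_top"
      by (rule filterlim_compose[OF exp_at_bot l2])
    then have "((\<lambda>x. exp (- (c * x)) / p i) \<longlongrightarrow> 0 / p i) at_top"
      by (intro tendsto_divide tendsto_const) (use ppos[of i] in auto)
    then show ?thesis by simp
  qed
  have lim: "(F \<longlongrightarrow> - p i * R 0) at_top"
  proof -
    have "isCont R 0" by (rule DERIV_isCont[OF dR]) auto
    then have "((\<lambda>y. R (exp (- c * y) / p i)) \<longlongrightarrow> R 0) at_top"
      by (rule isCont_tendsto_compose[OF _ tlim])
    then show ?thesis unfolding F_def by (intro tendsto_mult_left)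
  qed
  have dF: "(F has_real_derivative fy y) (at y)" if "y0 \<le> y" for y
  proof -
    define t where "t = exp (- c * y) / p i"
    have "exp (- c * y) \<le> exp (- c * y0)" using that c by simp
    then have "t \<le> 1" using ppos[of i] unfolding t_def pi[symmetric] by (simp add: divide_le_eq_1)
    moreover have "0 < t" unfolding t_def by (intro divide_pos_pos exp_gt_zero ppos)
    ultimately have t: "t \<in> {-1<..<2}" by simp
    have d1: "((\<lambda>y. exp (- c * y) / p i) has_real_derivative (- c * exp (- c * y) / p i)) (at y)"
      using ppos[of i] by (auto intro!: derivative_eq_intros simp del: exp_gt_zero)
    have "((\<lambda>y. R (exp (- c * y) / p i)) has_real_derivative gpoly p I t * (- c * exp (- c * y) / p i)) (at y)"
      using DERIV_chain2[OF dR[OF t, unfolded t_def] d1] unfolding t_def .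
    then have "(F has_real_derivative - p i * (gpoly p I t * (- c * exp (- c * y) / p i))) (at y)"
      unfolding F_def by (rule DERIV_cmult)
    moreover have "- p i * (gpoly p I t * (- c * exp (- c * y) / p i)) = fy y"
      using ppos[of i] unfolding fy_gpoly t_def by (simp add: field_simps)
    ultimately show ?thesis by simp
  qed
  have fy_meas: "fy \<in> borel_measurable borel"
    unfolding fy_def by measurable
  have "(\<integral>\<^sup>+y. ennreal (fy y) * indicator {y0..} y \<partial>lborel) = ennreal (- p i * R 0 - F y0)"
    by (rule nn_integral_FTC_atLeast[OF fy_meas dF fy_nonneg lim])
  also have "F y0 = - p i * R 1"
    unfolding F_def pi[symmetric] using ppos[of i] by simp
  also have "- p i * R 0 - - p i * R 1 = p i * (R 1 - R 0)" by (simp add: algebra_simps)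
  also have "R 1 - R 0 = Ig p I"
  proof -
    have "integral {-1..0} (gpoly p I) + integral {0..1} (gpoly p I) = integral {-1..1} (gpoly p I)"
      by (rule Henstock_Kurzweil_Integration.integral_combine) (auto intro: integrable_continuous_real gpoly_cont)
    then show ?thesis unfolding R_def Ig_def by simp
  qed
  finally have em: "emeasure M A = ennreal (p i * Ig p I)"
    using emA step2 by simp
  have Ig_nonneg: "0 \<le> Ig p I"
    unfolding Ig_def
  proof (rule integral_nonneg)
    show "gpoly p I integrable_on {0..1}" by (intro integrable_continuous_real gpoly_cont)
    fix t :: real assume t: "t \<in> {0..1}"
    show "0 \<le> gpoly p I t"
      unfolding gpoly_def
    proof (rule prod_nonneg)
      fix j assume "j \<in> I"
      then have "p j \<le> 1" using ple by (auto simp: I_def)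
      then have "t * p j \<le> 1" using t ppos[of j] by (auto intro: mult_le_one)
      then show "0 \<le> 1 - t * p j" by simp
    qed
  qed
  have "measure M A = p i * Ig p I"
    using em Ig_nonneg ppos[of i] by (simp add: measure_def)
  then show ?thesis by (simp add: M_def E_def A_def I_def)
qed


theorem theorem1:
  fixes nbr :: "'d \<Rightarrow> 'd \<Rightarrow> bool" and q :: "'d \<Rightarrow> 'o \<Rightarrow> real" and D :: 'd
    and \<omega> :: "nat \<Rightarrow> 'o" and k :: nat and \<Delta> \<epsilon> :: real
  assumes "inj_on \<omega> {1..k}"
    and "\<Delta> = sensitivity nbr q \<omega> k" and "\<Delta> > 0"
    and "\<epsilon> > 0"
  shows "\<forall>i\<in>{1..k}. pmf (permute_and_flip (\<lambda>i. q D (\<omega> i)) k \<epsilon> \<Delta>) i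
                  = rnm_exp_prob (\<lambda>i. q D (\<omega> i)) k \<epsilon> \<Delta> i"
proof
  fix i assume i: "i \<in> {1..k}"
  define qv where "qv = (\<lambda>i. q D (\<omega> i))"
  define c where "c = \<epsilon> / (2 * \<Delta>)"
  have c: "c > 0" using assms by (simp add: c_def)
  define qs where "qs = Max (qv ` {1..k})"
  define p where "p = (\<lambda>r. exp (c * (qv r - qs)))"
  have fin: "finite (qv ` {1..k})" "qv ` {1..k} \<noteq> {}" using i by auto
  have qmax: "qv j \<le> qs" if "j \<in> {1..k}" for j
    unfolding qs_def using fin that by (intro Max_ge) auto
  have p01: "0 \<le> p j \<and> p j \<le> 1" if "j \<in> {1..k}" for j
    using qmax[OF that] c by (simp add: p_def mult_nonneg_nonpos)
  have "permute_and_flip qv k \<epsilon> \<Delta> = PF p {1..k}"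
    unfolding permute_and_flip_def PF_def Let_def p_def c_def qs_def by simp
  then have "pmf (permute_and_flip qv k \<epsilon> \<Delta>) i = p i * Ig p ({1..k} - {i})"
    using PF_formula[of "{1..k}" i p] i p01 by auto
  also have "\<dots> = rnm_exp_prob qv k \<epsilon> \<Delta> i"
    unfolding rnm_exp_prob_def Let_def
    using RNM_formula[OF c i, of qv] unfolding p_def qs_def c_def by simp
  finally show "pmf (permute_and_flip (\<lambda>i. q D (\<omega> i)) k \<epsilon> \<Delta>) i
                  = rnm_exp_prob (\<lambda>i. q D (\<omega> i)) k \<epsilon> \<Delta> i"
    unfolding qv_def .
qed

end
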